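(* Let $q\ge2$ be fixed and let $r^*(n)$ denote the minimum redundancy of a $2$-read $(n,3)_q$-code in $\Sigma_q^n$ (equivalently, of a classical $(n,2;\mathcal{I}_1)_q$-reconstruction code). Then, as $n\to\infty$, $$\log_q\log_q n-o(1)\le r^*(n)\le \log_q\log_q n+1-\log_q2+o(1).$$
   Context: $\Sigma_q=\{0,\dots,q-1\}$. For $\boldsymbol{x}\in\Sigma_q^n$, $x[i]$ is its $i$-th entry, with $x[i]=0$ for $i\notin[1,n]$. $\mathcal{R}(\boldsymbol{x})$ is the vector of length $n+1$ whose $i$-th entry is the multiset $\{\{x[i-1],x[i]\}\}$. $\mathcal{C}\subseteq\Sigma_q^n$ is a $2$-read $(n,d)_q$-code if $d_H(\mathcal{R}(\boldsymbol{x}),\mathcal{R}(\boldsymbol{y}))\ge d$ for all distinct $\boldsymbol{x},\boldsymbol{y}\in\mathcal{C}$ ($d_H$ = Hamming distance). $\mathcal{I}_1(\boldsymbol{x})$ is the set of length-$(n+1)$ sequences obtained from $\boldsymbol{x}$ by inserting exactly one symbol; $\mathcal{C}$ is a classical $(n,2;\mathcal{I}_1)_q$-reconstruction code if $|\mathcal{I}_1(\boldsymbol{x})\cap\mathcal{I}_1(\boldsymbol{y})|\le1$ for all distinct $\boldsymbol{x},\boldsymbol{y}\in\mathcal{C}$. Redundancy: $r(\mathcal{C})=n-\log_q|\mathcal{C}|$. *)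

theory Defs
  imports Complex_Main "HOL-Library.Multiset"
begin

definition Sigma_n :: "nat \<Rightarrow> nat \<Rightarrow> nat list set" where
  "Sigma_n q n = {xs. length xs = n \<and> set xs \<subseteq> {..<q}}"

text \<open>x[i] with 1-based indexing, and x[i] = 0 outside [1,n].\<close>
definition entry :: "nat list \<Rightarrow> nat \<Rightarrow> nat" where
  "entry xs i = (if 1 \<le> i \<and> i \<le> length xs then xs ! (i - 1) else 0)"

text \<open>The 2-read vector R(x): its i-th entry (i = 1..n+1) is the multiset {x[i-1], x[i]}.\<close>
definition read2 :: "nat list \<Rightarrow> nat \<Rightarrow> nat multiset" where
  "read2 xs i = {# entry xs (i - 1), entry xs i #}"

definition read_dist :: "nat \<Rightarrow> nat list \<Rightarrow> nat list \<Rightarrow> nat" where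
  "read_dist n xs ys = card {i \<in> {1..n+1}. read2 xs i \<noteq> read2 ys i}"

definition two_read_code :: "nat \<Rightarrow> nat \<Rightarrow> nat \<Rightarrow> nat list set \<Rightarrow> bool" where
  "two_read_code q n d C \<longleftrightarrow> C \<subseteq> Sigma_n q n \<and>
     (\<forall>x\<in>C. \<forall>y\<in>C. x \<noteq> y \<longrightarrow> read_dist n x y \<ge> d)"

definition redundancy :: "nat \<Rightarrow> nat \<Rightarrow> nat list set \<Rightarrow> real" where
  "redundancy q n C = real n - log (real q) (real (card C))"

definition r_star :: "nat \<Rightarrow> nat \<Rightarrow> real" where
  "r_star q n = Min {redundancy q n C | C. two_read_code q n 3 C \<and> C \<noteq> {}}"

end

theory Submission
  imports Defs "HOL-Real_Asymp.Real_Asymp"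
begin

lemma Sigma_n_eq: "Sigma_n q n = {xs. set xs \<subseteq> {..<q} \<and> length xs = n}"
  by (auto simp: Sigma_n_def)

lemma finite_Sigma_n: "finite (Sigma_n q n)"
  unfolding Sigma_n_eq by (rule finite_lists_length_eq) simp

lemma card_Sigma_n: "card (Sigma_n q n) = q ^ n"
  unfolding Sigma_n_eq by (subst card_lists_length_eq) auto

lemma r_star_set_finite:
  "finite {redundancy q n C | C. two_read_code q n 3 C \<and> C \<noteq> {}}"
proof -
  have "{redundancy q n C | C. two_read_code q n 3 C \<and> C \<noteq> {}}
        \<subseteq> redundancy q n ` Pow (Sigma_n q n)"
    by (auto simp: two_read_code_def)
  moreover have "finite (redundancy q n ` Pow (Sigma_n q n))"
    using finite_Sigma_n by blast
  ultimately show ?thesis by (rule finite_subset)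
qed

lemma r_star_le:
  assumes "two_read_code q n 3 C" "C \<noteq> {}"
  shows "r_star q n \<le> redundancy q n C"
  unfolding r_star_def using assms r_star_set_finite
  by (intro Min_le) auto

lemma r_star_ge:
  assumes q: "q \<ge> 1"
    and h: "\<And>C. two_read_code q n 3 C \<Longrightarrow> C \<noteq> {} \<Longrightarrow> b \<le> redundancy q n C"
  shows "b \<le> r_star q n"
proof -
  have "two_read_code q n 3 {replicate n 0}"
    using q by (auto simp: two_read_code_def Sigma_n_def)
  then have ne: "{redundancy q n C | C. two_read_code q n 3 C \<and> C \<noteq> {}} \<noteq> {}"
    by blast
  show ?thesis unfolding r_star_def
    using r_star_set_finite ne h by (subst Min_ge_iff) auto
qed

lemma swap_dist:
  assumes "1 \<le> u" "u \<le> v"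
    and out: "\<And>t. t < u \<or> v < t \<Longrightarrow> entry x t = entry y t"
    and sw: "\<And>t. u \<le> t \<Longrightarrow> t < v \<Longrightarrow> entry x t = entry y (Suc t) \<and> entry x (Suc t) = entry y t"
  shows "read_dist n x y \<le> 2"
proof -
  have sub: "{i \<in> {1..n+1}. read2 x i \<noteq> read2 y i} \<subseteq> {u, Suc v}"
  proof
    fix i assume i: "i \<in> {i \<in> {1..n+1}. read2 x i \<noteq> read2 y i}"
    show "i \<in> {u, Suc v}"
    proof (rule ccontr)
      assume ni: "i \<notin> {u, Suc v}"
      have i1: "i \<ge> 1" using i by auto
      have "read2 x i = read2 y i"
      proof (cases "i < u \<or> Suc v < i")
        case True
        then have "i - 1 < u \<or> v < i - 1" "i < u \<or> v < i" by auto
        then have "entry x (i - 1) = entry y (i - 1)" "entry x i = entry y i"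
          using out by blast+
        then show ?thesis by (simp add: read2_def)
      next
        case False
        with ni have "u \<le> i - 1" "i - 1 < v" using i1 by auto
        from sw[OF this] i1 have "entry x (i - 1) = entry y i" "entry x i = entry y (i - 1)"
          by auto
        then show ?thesis by (simp add: read2_def add_mset_commute)
      qed
      with i show False by auto
    qed
  qed
  have "read_dist n x y \<le> card {u, Suc v}"
    unfolding read_dist_def by (rule card_mono) (use sub in auto)
  also have "\<dots> \<le> 2" by (simp add: card_insert_if)
  finally show ?thesis .
qed

definition gpat :: "nat \<Rightarrow> nat \<Rightarrow> nat list" where
  "gpat l k = map (\<lambda>t. if t < k then t mod 2 else Suc t mod 2) [0..<l]"

lemma length_gpat[simp]: "length (gpat l k) = l" by (simp add: gpat_def)

lemma nth_gpat: "t < l \<Longrightarrow> gpat l k ! t = (if t < k then t mod 2 else Suc t mod 2)"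
  by (simp add: gpat_def)

lemma entry_app_out:
  assumes "length w = length w'" "t \<le> length pre \<or> length pre + length w < t"
  shows "entry (pre @ w @ suf) t = entry (pre @ w' @ suf) t"
  using assms by (auto simp: entry_def nth_append)

lemma entry_app_in:
  assumes "length pre < t" "t \<le> length pre + length w"
  shows "entry (pre @ w @ suf) t = w ! (t - length pre - 1)"
  using assms by (auto simp: entry_def nth_append)

lemma gpat_dist:
  assumes "j < k" "k \<le> l"
  shows "read_dist n (pre @ gpat l j @ suf) (pre @ gpat l k @ suf) \<le> 2"
proof (rule swap_dist[where u = "length pre + j + 1" and v = "length pre + k"])
  let ?s = "length pre"
  show "1 \<le> ?s + j + 1" by simp
  show "?s + j + 1 \<le> ?s + k" using assms by simp
  fix t
  assume h: "t < ?s + j + 1 \<or> ?s + k < t"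
  show "entry (pre @ gpat l j @ suf) t = entry (pre @ gpat l k @ suf) t"
  proof (cases "t \<le> ?s \<or> ?s + l < t")
    case True then show ?thesis by (intro entry_app_out) auto
  next
    case False
    then have "?s < t" "t \<le> ?s + l" by auto
    then show ?thesis using h assms
      by (simp add: entry_app_in nth_gpat) linarith
  qed
next
  let ?s = "length pre"
  fix t assume h: "?s + j + 1 \<le> t" "t < ?s + k"
  then have a: "?s < t" "t \<le> ?s + l" "?s < Suc t" "Suc t \<le> ?s + l" using assms by auto
  show "entry (pre @ gpat l j @ suf) t = entry (pre @ gpat l k @ suf) (Suc t) \<and>
        entry (pre @ gpat l j @ suf) (Suc t) = entry (pre @ gpat l k @ suf) t"
  proof -
    define oo where "oo = t - Suc ?s"
    have o: "t = Suc (?s + oo)" using h by (simp add: oo_def)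
    have "j \<le> oo" "Suc oo < k" using h unfolding o by auto
    then show ?thesis using a unfolding o by (simp add: entry_app_in nth_gpat)
  qed
qed

lemma gpat_inj: "inj_on (gpat l) {..l}"
proof (rule inj_onI)
  fix a b assume ab: "a \<in> {..l}" "b \<in> {..l}" "gpat l a = gpat l b"
  show "a = b"
  proof (rule ccontr)
    assume "a \<noteq> b"
    then consider "a < b" | "b < a" by linarith
    then show False
    proof cases
      case 1
      then have "a < l" using ab by auto
      then have "gpat l a ! a = gpat l b ! a" using ab by simp
      then show False using 1 \<open>a < l\<close> by (simp add: nth_gpat) presburger
    next
      case 2
      then have "b < l" using ab by auto
      then have "gpat l a ! b = gpat l b ! b" using ab by simp
      then show False using 2 \<open>b < l\<close> by (simp add: nth_gpat) presburger
    qed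
  qed
qed

lemma gpat_Sigma: "q \<ge> 2 \<Longrightarrow> gpat l k \<in> Sigma_n q l"
  by (auto simp: Sigma_n_def gpat_def)

definition block :: "nat \<Rightarrow> nat \<Rightarrow> nat list \<Rightarrow> nat list" where
  "block l b x = take l (drop (b * l) x)"

definition repl :: "nat \<Rightarrow> nat \<Rightarrow> nat list \<Rightarrow> nat list \<Rightarrow> nat list" where
  "repl l b x w = take (b * l) x @ w @ drop (b * l + l) x"

lemma split3: "take a xs @ take c (drop a xs) @ drop (a + c) xs = xs"
  by (metis append_take_drop_id drop_drop add.commute)

lemma block_decomp: "x = take (b * l) x @ block l b x @ drop (b * l + l) x"
  unfolding block_def by (rule split3[symmetric])

lemma length_block: "b * l + l \<le> length x \<Longrightarrow> length (block l b x) = l"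
  by (simp add: block_def)

lemma block_repl_lt:
  assumes "b' < b" "length w = l" "b * l + l \<le> length x"
  shows "block l b' (repl l b x w) = block l b' x"
proof -
  have "b' * l + l \<le> b * l" using assms(1)
    by (metis add.commute mult_Suc less_eq_Suc_le mult_le_mono1)
  then show ?thesis using assms
    by (simp add: block_def repl_def take_drop min_def)
qed

lemma block_repl_eq:
  assumes "length w = l" "b * l + l \<le> length x"
  shows "block l b (repl l b x w) = w"
  using assms by (simp add: block_def repl_def)

lemma length_repl:
  assumes "length w = l" "b * l + l \<le> length x"
  shows "length (repl l b x w) = length x"
  using assms by (simp add: repl_def)

lemma repl_Sigma:
  assumes "x \<in> Sigma_n q n" "w \<in> Sigma_n q l" "b * l + l \<le> n"
  shows "repl l b x w \<in> Sigma_n q n"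
  using assms by (auto simp: Sigma_n_def repl_def dest: in_set_takeD in_set_dropD)

definition G :: "nat \<Rightarrow> nat list set" where
  "G l = gpat l ` {..l}"

definition fb :: "nat \<Rightarrow> nat \<Rightarrow> nat list \<Rightarrow> nat" where
  "fb l m x = (LEAST b. b < m \<and> block l b x \<in> G l)"

lemma fb_repl:
  assumes "b < m" "block l b x \<in> G l" "w \<in> G l" "m * l \<le> length x"
  shows "fb l m (repl l (fb l m x) x w) = fb l m x"
proof -
  let ?b = "fb l m x"
  have P: "?b < m \<and> block l ?b x \<in> G l"
    unfolding fb_def by (rule LeastI[of _ b]) (use assms in auto)
  have minb: "\<And>b'. b' < ?b \<Longrightarrow> \<not> (b' < m \<and> block l b' x \<in> G l)"
    unfolding fb_def using not_less_Least by blast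
  have lw: "length w = l" using assms(3) by (auto simp: G_def)
  have bl: "?b * l + l \<le> length x"
  proof -
    have "?b * l + l = Suc ?b * l" by simp
    also have "\<dots> \<le> m * l" using P by (intro mult_le_mono1) auto
    finally show ?thesis using assms(4) by simp
  qed
  show ?thesis unfolding fb_def[of l m "repl l ?b x w"]
  proof (rule Least_equality)
    show "?b < m \<and> block l ?b (repl l ?b x w) \<in> G l"
      using P block_repl_eq[OF lw bl] assms(3) by simp
  next
    fix y assume y: "y < m \<and> block l y (repl l ?b x w) \<in> G l"
    show "?b \<le> y"
    proof (rule ccontr)
      assume "\<not> ?b \<le> y"
      then have "y < ?b" by simp
      with block_repl_lt[OF this lw bl] y minb show False by auto
    qed
  qed
qed

lemma fb_props:
  assumes "b < m" "block l b x \<in> G l" "m * l \<le> length x"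
  shows "fb l m x < m" "block l (fb l m x) x \<in> G l" "fb l m x * l + l \<le> length x"
proof -
  have P: "fb l m x < m \<and> block l (fb l m x) x \<in> G l"
    unfolding fb_def by (rule LeastI[of _ b]) (use assms in auto)
  then show "fb l m x < m" "block l (fb l m x) x \<in> G l" by auto
  have "fb l m x * l + l = Suc (fb l m x) * l" by simp
  also have "\<dots> \<le> m * l" using P by (intro mult_le_mono1) auto
  finally show "fb l m x * l + l \<le> length x" using assms(3) by simp
qed

lemma take_repl: "length w = l \<Longrightarrow> b * l + l \<le> length x \<Longrightarrow> take (b * l) (repl l b x w) = take (b * l) x"
  by (simp add: repl_def)

lemma drop_repl: "length w = l \<Longrightarrow> b * l + l \<le> length x \<Longrightarrow> drop (b * l + l) (repl l b x w) = drop (b * l + l) x"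
  by (simp add: repl_def)

lemma lower_count:
  assumes q2: "q \<ge> 2" and code: "two_read_code q n 3 C" and ml: "m * l \<le> n"
  shows "card (C \<inter> {x \<in> Sigma_n q n. \<exists>b<m. block l b x \<in> G l}) * (l + 1) \<le> q ^ n"
proof -
  define V where "V = {x \<in> Sigma_n q n. \<exists>b<m. block l b x \<in> G l}"
  define \<Phi> where "\<Phi> = (\<lambda>(c, k). repl l (fb l m c) c (gpat l k))"
  have CS: "C \<subseteq> Sigma_n q n" using code by (simp add: two_read_code_def)
  have lenS: "\<And>x. x \<in> Sigma_n q n \<Longrightarrow> length x = n" by (simp add: Sigma_n_def)
  have gG: "\<And>k. k \<le> l \<Longrightarrow> gpat l k \<in> G l" by (simp add: G_def)
  have inj: "inj_on \<Phi> ((C \<inter> V) \<times> {..l})"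
  proof (rule inj_onI)
    fix p p' assume p: "p \<in> (C \<inter> V) \<times> {..l}" and p': "p' \<in> (C \<inter> V) \<times> {..l}"
      and eqp: "\<Phi> p = \<Phi> p'"
    obtain c k c' k' where pp: "p = (c, k)" "p' = (c', k')" by (cases p, cases p') auto
    have c: "c \<in> C" "c \<in> V" and k: "k \<in> {..l}" and c': "c' \<in> C" "c' \<in> V" and k': "k' \<in> {..l}"
      using p p' pp by auto
    have eq: "\<Phi> (c, k) = \<Phi> (c', k')" using eqp pp by simp
    obtain b0 where b0: "b0 < m" "block l b0 c \<in> G l" using c by (auto simp: V_def)
    obtain b1 where b1: "b1 < m" "block l b1 c' \<in> G l" using c' by (auto simp: V_def)
    have lc: "length c = n" "length c' = n" using c c' CS lenS by auto
    note F = fb_props[OF b0(1) b0(2) ml[folded lc(1)]]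
    note F' = fb_props[OF b1(1) b1(2) ml[folded lc(2)]]
    let ?b = "fb l m c" and ?b' = "fb l m c'"
    have fy: "fb l m (\<Phi> (c, k)) = ?b"
      unfolding \<Phi>_def using fb_repl[OF b0(1) b0(2) gG[of k] ml[folded lc(1)]] k by auto
    have fy': "fb l m (\<Phi> (c', k')) = ?b'"
      unfolding \<Phi>_def using fb_repl[OF b1(1) b1(2) gG[of k'] ml[folded lc(2)]] k' by auto
    have bb: "?b' = ?b" using fy fy' eq by simp
    have bl: "?b * l + l \<le> length c" "?b * l + l \<le> length c'" using F(3) F'(3) bb by auto
    have e: "repl l ?b c (gpat l k) = repl l ?b c' (gpat l k')" using eq bb by (simp add: \<Phi>_def)
    have pre: "take (?b * l) c = take (?b * l) c'"
      using arg_cong[OF e, of "take (?b * l)"] bl by (simp add: take_repl)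
    have suf: "drop (?b * l + l) c = drop (?b * l + l) c'"
      using arg_cong[OF e, of "drop (?b * l + l)"] bl by (simp add: drop_repl)
    have "gpat l k = gpat l k'"
      using arg_cong[OF e, of "block l ?b"] bl by (simp add: block_repl_eq)
    then have kk: "k = k'" using gpat_inj k k' by (auto dest: inj_onD)
    obtain a where a: "a \<le> l" "block l ?b c = gpat l a" using F(2) by (auto simp: G_def)
    obtain a' where a': "a' \<le> l" "block l ?b c' = gpat l a'" using F'(2) bb by (auto simp: G_def)
    have cd: "c = take (?b * l) c @ gpat l a @ drop (?b * l + l) c"
      using block_decomp[of c ?b l] a by simp
    have cd': "c' = take (?b * l) c @ gpat l a' @ drop (?b * l + l) c"
      using block_decomp[of c' ?b l] a' pre suf by simp
    have "c = c'"
    proof (rule ccontr)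
      assume ne: "c \<noteq> c'"
      then have "a \<noteq> a'" using cd cd' by auto
      then consider "a < a'" | "a' < a" by linarith
      then have "read_dist n c c' \<le> 2 \<or> read_dist n c' c \<le> 2"
      proof cases
        case 1 then show ?thesis using gpat_dist[OF 1 a'(1), of n "take (?b * l) c" "drop (?b * l + l) c"]
          cd cd' by simp
      next
        case 2 then show ?thesis using gpat_dist[OF 2 a(1), of n "take (?b * l) c" "drop (?b * l + l) c"]
          cd cd' by simp
      qed
      moreover have "read_dist n c c' \<ge> 3" "read_dist n c' c \<ge> 3"
        using code c c' ne by (auto simp: two_read_code_def)
      ultimately show False by linarith
    qed
    with kk pp show "p = p'" by simp
  qed
  have img: "\<Phi> ` ((C \<inter> V) \<times> {..l}) \<subseteq> Sigma_n q n"
  proof (rule image_subsetI)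
    fix p assume p: "p \<in> (C \<inter> V) \<times> {..l}"
    obtain c k where pp: "p = (c, k)" by (cases p) auto
    have c: "c \<in> C" "c \<in> V" and k: "k \<in> {..l}" using p pp by auto
    obtain b0 where b0: "b0 < m" "block l b0 c \<in> G l" using c by (auto simp: V_def)
    have lc: "length c = n" using c CS lenS by auto
    note F = fb_props[OF b0(1) b0(2) ml[folded lc]]
    show "\<Phi> p \<in> Sigma_n q n"
      unfolding \<Phi>_def pp using repl_Sigma[OF _ gpat_Sigma[OF q2]] c CS F(3) lc by auto
  qed
  have "card ((C \<inter> V) \<times> {..l}) \<le> card (Sigma_n q n)"
    by (rule card_inj_on_le[OF inj img finite_Sigma_n])
  moreover have "finite (C \<inter> V)" using CS finite_Sigma_n by (meson finite_subset inf.coboundedI1)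
  ultimately show ?thesis unfolding V_def[symmetric] by (simp add: card_cartesian_product card_Sigma_n)
qed

lemma card_split:
  "card {x \<in> Sigma_n q (a + b). P (take a x) \<and> Q (drop a x)} =
   card {w \<in> Sigma_n q a. P w} * card {w \<in> Sigma_n q b. Q w}"
proof -
  let ?A = "{w \<in> Sigma_n q a. P w}" and ?B = "{w \<in> Sigma_n q b. Q w}"
  have "bij_betw (\<lambda>(u, v). u @ v) (?A \<times> ?B) {x \<in> Sigma_n q (a + b). P (take a x) \<and> Q (drop a x)}"
  proof (rule bij_betw_imageI)
    show "inj_on (\<lambda>(u, v). u @ v) (?A \<times> ?B)"
    proof (rule inj_onI)
      fix p p' assume "p \<in> ?A \<times> ?B" "p' \<in> ?A \<times> ?B" and e: "(\<lambda>(u, v). u @ v) p = (\<lambda>(u, v). u @ v) p'"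
      then obtain u v u' v' where pp: "p = (u, v)" "p' = (u', v')" "length u = a" "length u' = a"
        by (cases p, cases p') (auto simp: Sigma_n_def)
      then have "u @ v = u' @ v'" using e by simp
      then show "p = p'" using pp by simp
    qed
    show "(\<lambda>(u, v). u @ v) ` (?A \<times> ?B) = {x \<in> Sigma_n q (a + b). P (take a x) \<and> Q (drop a x)}"
    proof
      show "(\<lambda>(u, v). u @ v) ` (?A \<times> ?B) \<subseteq> {x \<in> Sigma_n q (a + b). P (take a x) \<and> Q (drop a x)}"
      proof (rule image_subsetI)
        fix p assume p: "p \<in> ?A \<times> ?B"
        obtain u v where pp: "p = (u, v)" by (cases p)
        have u: "length u = a" "set u \<subseteq> {..<q}" "P u" and v: "length v = b" "set v \<subseteq> {..<q}" "Q v"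
          using p pp by (auto simp: Sigma_n_def)
        show "(\<lambda>(u, v). u @ v) p \<in> {x \<in> Sigma_n q (a + b). P (take a x) \<and> Q (drop a x)}"
          using u v unfolding pp by (simp add: Sigma_n_def)
      qed
      show "{x \<in> Sigma_n q (a + b). P (take a x) \<and> Q (drop a x)} \<subseteq> (\<lambda>(u, v). u @ v) ` (?A \<times> ?B)"
      proof
        fix x assume x: "x \<in> {x \<in> Sigma_n q (a + b). P (take a x) \<and> Q (drop a x)}"
        then have "(take a x, drop a x) \<in> ?A \<times> ?B"
          by (auto simp: Sigma_n_def dest: in_set_takeD in_set_dropD)
        then show "x \<in> (\<lambda>(u, v). u @ v) ` (?A \<times> ?B)"
          by (metis (no_types, lifting) append_take_drop_id case_prod_conv image_eqI)
      qed
    qed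
  qed
  then have "card (?A \<times> ?B) = card {x \<in> Sigma_n q (a + b). P (take a x) \<and> Q (drop a x)}"
    by (rule bij_betw_same_card)
  then show ?thesis by (simp add: card_cartesian_product)
qed

lemma block_Suc: "block l (Suc b) x = block l b (drop l x)"
  by (simp add: block_def add.commute)

lemma block_0: "block l 0 x = take l x"
  by (simp add: block_def)

lemma card_U:
  "card {x \<in> Sigma_n q (m * l + r). \<forall>b<m. block l b x \<notin> G l} =
   card {w \<in> Sigma_n q l. w \<notin> G l} ^ m * q ^ r"
proof (induction m)
  case 0
  then show ?case by (simp add: card_Sigma_n)
next
  case (Suc m)
  have "{x \<in> Sigma_n q (Suc m * l + r). \<forall>b<Suc m. block l b x \<notin> G l} =
        {x \<in> Sigma_n q (l + (m * l + r)). take l x \<notin> G l \<and> (\<forall>b<m. block l b (drop l x) \<notin> G l)}"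
    by (auto simp: All_less_Suc2 block_Suc block_0 add.assoc)
  then have "card {x \<in> Sigma_n q (Suc m * l + r). \<forall>b<Suc m. block l b x \<notin> G l} =
        card {x \<in> Sigma_n q (l + (m * l + r)). take l x \<notin> G l \<and> (\<forall>b<m. block l b (drop l x) \<notin> G l)}"
    by (rule arg_cong)
  also have "\<dots> = card {w \<in> Sigma_n q l. w \<notin> G l} * card {x \<in> Sigma_n q (m * l + r). \<forall>b<m. block l b x \<notin> G l}"
    by (rule card_split)
  also have "\<dots> = card {w \<in> Sigma_n q l. w \<notin> G l} ^ Suc m * q ^ r"
    using Suc.IH by simp
  finally show ?case .
qed

lemma card_G: "card (G l) = l + 1"
  unfolding G_def by (simp add: card_image gpat_inj)

lemma card_nongood:
  assumes "q \<ge> 2"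
  shows "card {w \<in> Sigma_n q l. w \<notin> G l} = q ^ l - (l + 1)"
proof -
  have "{w \<in> Sigma_n q l. w \<notin> G l} = Sigma_n q l - G l" by auto
  moreover have "G l \<subseteq> Sigma_n q l" using gpat_Sigma[OF assms] by (auto simp: G_def)
  moreover have fG: "finite (G l)" by (simp add: G_def)
  ultimately show ?thesis
    using card_Diff_subset[OF fG] card_G card_Sigma_n by metis
qed

lemma one_minus_pow_le_exp:
  fixes x :: real
  assumes "0 \<le> x" "x \<le> 1"
  shows "(1 - x) ^ m \<le> exp (- (x * m))"
proof -
  have "(1 - x) ^ m \<le> exp (- x) ^ m"
    using assms exp_ge_add_one_self[of "-x"] by (intro power_mono) auto
  also have "\<dots> = exp (- (x * m))"
    by (simp add: exp_of_nat_mult[symmetric] mult.commute)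
  finally show ?thesis .
qed

lemma lower_main:
  assumes q2: "q \<ge> 2" and code: "two_read_code q n 3 C" and l1: "l \<ge> 1"
  shows "real (card C) \<le> real q ^ n / (real l + 1) + real q ^ n * exp (- ((real l + 1) * real (n div l) / real q ^ l))"
proof -
  define m where "m = n div l"
  define r where "r = n mod l"
  have nd: "n = m * l + r" unfolding m_def r_def by simp
  have ml: "m * l \<le> n" using nd by simp
  define V where "V = {x \<in> Sigma_n q n. \<exists>b<m. block l b x \<in> G l}"
  define U where "U = {x \<in> Sigma_n q n. \<forall>b<m. block l b x \<notin> G l}"
  have CS: "C \<subseteq> Sigma_n q n" using code by (simp add: two_read_code_def)
  have fC: "finite C" using CS finite_Sigma_n finite_subset by blast
  have "C = (C \<inter> V) \<union> (C - V)" by auto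
  then have "card C \<le> card (C \<inter> V) + card (C - V)"
    by (metis card_Un_le)
  moreover have "C - V \<subseteq> U" using CS by (auto simp: U_def V_def)
  then have "card (C - V) \<le> card U"
    by (intro card_mono) (auto simp: U_def finite_Sigma_n)
  moreover have "card U = (q ^ l - (l + 1)) ^ m * q ^ r"
    unfolding U_def using card_U[of q m l r] card_nongood[OF q2] nd by simp
  moreover have "card (C \<inter> V) * (l + 1) \<le> q ^ n"
    unfolding V_def by (rule lower_count[OF q2 code ml])
  ultimately have A0: "card C \<le> card (C \<inter> V) + (q ^ l - (l + 1)) ^ m * q ^ r"
    and cnt: "card (C \<inter> V) * (l + 1) \<le> q ^ n" by linarith+
  have "real (card (C \<inter> V) * (l + 1)) \<le> real (q ^ n)" using cnt by (simp only: of_nat_le_iff)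
  then have "real (card (C \<inter> V)) * (real l + 1) \<le> real q ^ n" by (simp add: algebra_simps)
  then have h1: "real (card (C \<inter> V)) \<le> real q ^ n / (l + 1)"
    by (simp add: pos_le_divide_eq add.commute)
  have "real (card C) \<le> real (card (C \<inter> V) + (q ^ l - (l + 1)) ^ m * q ^ r)"
    using A0 by (simp only: of_nat_le_iff)
  then have A: "real (card C) \<le> real q ^ n / (real l + 1) + real ((q ^ l - (l + 1)) ^ m * q ^ r)"
    using h1 by (simp only: of_nat_add of_nat_1)
  have ql: "real q ^ l > 0" using q2 by simp
  have le1n: "l + 1 \<le> q ^ l"
  proof -
    have "l + 1 \<le> 2 ^ l"
    proof (induction l)
      case (Suc l)
      have "1 \<le> (2::nat) ^ l" by simp
      then show ?case using Suc by simp
    qed simp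
    also have "(2::nat) ^ l \<le> q ^ l" using q2 by (intro power_mono) auto
    finally show ?thesis .
  qed
  have le1: "real l + 1 \<le> real q ^ l"
    using le1n by (metis of_nat_1 of_nat_add of_nat_le_iff of_nat_power)
  have e1: "real q ^ l - (real l + 1) = real q ^ l * (1 - (real l + 1) / real q ^ l)"
    using ql by (simp add: right_diff_distrib)
  have e2: "(real q ^ l) ^ m * real q ^ r = real q ^ n"
    by (simp add: nd power_add power_mult mult.commute)
  have "real ((q ^ l - (l + 1)) ^ m * q ^ r) = (real q ^ l - (real l + 1)) ^ m * real q ^ r"
    using le1n by (simp add: of_nat_diff add.commute)
  also have "\<dots> = (real q ^ l) ^ m * (1 - (real l + 1) / real q ^ l) ^ m * real q ^ r"
    unfolding e1 by (simp only: power_mult_distrib)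
  also have "\<dots> = real q ^ n * (1 - (real l + 1) / real q ^ l) ^ m"
    using e2 by (metis mult.assoc mult.commute)
  also have "\<dots> \<le> real q ^ n * exp (- ((real l + 1) / real q ^ l * m))"
    using ql le1 by (intro mult_left_mono one_minus_pow_le_exp) auto
  finally have B: "real ((q ^ l - (l + 1)) ^ m * q ^ r) \<le> real q ^ n * exp (- ((real l + 1) / real q ^ l * m))" .
  have "real (card C) \<le> real q ^ n / (real l + 1) + real q ^ n * exp (- ((real l + 1) / real q ^ l * m))"
    using A B by linarith
  then show ?thesis by (simp add: m_def)
qed

lemma mset2_cancel: "{#a, b#} = {#a, c#} \<Longrightarrow> b = c"
  by simp

lemma mset2_swap: "{#a, b#} = {#c, d#} \<Longrightarrow> a \<noteq> c \<Longrightarrow> a = d \<and> b = c"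
  by (auto simp: add_eq_conv_ex)

lemma entry_0[simp]: "entry x 0 = 0" by (simp add: entry_def)

lemma entry_big: "length x < t \<Longrightarrow> entry x t = 0" by (simp add: entry_def)

lemma entry_eqI:
  assumes "length x = length y" "\<And>t. entry x t = entry y t"
  shows "x = y"
proof (rule nth_equalityI)
  show "length x = length y" by fact
  fix i assume "i < length x"
  then show "x ! i = y ! i" using assms(2)[of "Suc i"] assms(1) by (simp add: entry_def)
qed

lemma struct:
  assumes x: "length x = n" and y: "length y = n" and ne: "x \<noteq> y"
    and rd: "read_dist n x y \<le> 2"
  shows "\<exists>u v. 1 \<le> u \<and> u \<le> v \<and> v \<le> n \<and>
     (\<forall>t. t < u \<or> v < t \<longrightarrow> entry x t = entry y t) \<and>
     (\<forall>t. u \<le> t \<longrightarrow> t < v \<longrightarrow> entry x t = entry y (Suc t) \<and> entry x (Suc t) = entry y t) \<and>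
     (\<forall>t. u \<le> t \<longrightarrow> t \<le> v \<longrightarrow> entry x t \<noteq> entry y t)"
proof -
  have ex: "\<exists>t. entry x t \<noteq> entry y t"
    using entry_eqI[of x y] x y ne by auto
  define u where "u = (LEAST t. entry x t \<noteq> entry y t)"
  have xu: "entry x u \<noteq> entry y u" unfolding u_def using ex by (rule LeastI_ex)
  have bu: "\<And>t. t < u \<Longrightarrow> entry x t = entry y t" unfolding u_def using not_less_Least by blast
  have u1: "1 \<le> u" using xu by (cases u) auto
  have un: "u \<le> n" using xu x y entry_big[of x u] entry_big[of y u] by fastforce
  have ex2: "\<exists>t. u < t \<and> entry x t = entry y t"
    using un x y entry_big[of x "Suc n"] entry_big[of y "Suc n"] by (intro exI[of _ "Suc n"]) auto
  define w where "w = (LEAST t. u < t \<and> entry x t = entry y t)"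
  have w: "u < w" "entry x w = entry y w" unfolding w_def using LeastI_ex[OF ex2] by auto
  have bw: "\<And>t. t < w \<Longrightarrow> \<not> (u < t \<and> entry x t = entry y t)"
    unfolding w_def using not_less_Least by blast
  have wn: "w \<le> Suc n"
    unfolding w_def using un x y entry_big[of x "Suc n"] entry_big[of y "Suc n"]
    by (intro Least_le) auto
  have mid: "\<And>t. u \<le> t \<Longrightarrow> t < w \<Longrightarrow> entry x t \<noteq> entry y t"
    using bw xu by (metis le_neq_implies_less)
  define D where "D = {i \<in> {1..n+1}. read2 x i \<noteq> read2 y i}"
  have uD: "u \<in> D" unfolding D_def read2_def using u1 un xu bu[of "u - 1"] by auto
  have wD: "w \<in> D"
  proof -
    have "entry x (w - 1) \<noteq> entry y (w - 1)" using mid[of "w - 1"] w by auto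
    then have "read2 x w \<noteq> read2 y w" unfolding read2_def using w(2)
      by (metis add_mset_commute mset2_cancel)
    then show ?thesis unfolding D_def using w wn by auto
  qed
  have fD: "finite D" unfolding D_def by simp
  have cD: "card D \<le> 2" using rd unfolding D_def read_dist_def .
  have onlyD: "\<And>i. i \<in> D \<Longrightarrow> i = u \<or> i = w"
  proof (rule ccontr)
    fix i assume i: "i \<in> D" "\<not> (i = u \<or> i = w)"
    then have "{u, w, i} \<subseteq> D" using uD wD by auto
    then have "card {u, w, i} \<le> card D" using fD by (rule card_mono[rotated])
    moreover have "card {u, w, i} = 3" using i w by auto
    ultimately show False using cD by simp
  qed
  have req: "\<And>i. 1 \<le> i \<Longrightarrow> i \<le> Suc n \<Longrightarrow> i \<noteq> u \<Longrightarrow> i \<noteq> w \<Longrightarrow> read2 x i = read2 y i"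
    using onlyD unfolding D_def by auto
  have sw: "\<And>t. u \<le> t \<Longrightarrow> t < w - 1 \<Longrightarrow> entry x t = entry y (Suc t) \<and> entry x (Suc t) = entry y t"
  proof -
    fix t assume t: "u \<le> t" "t < w - 1"
    have "read2 x (Suc t) = read2 y (Suc t)" using t w wn by (intro req) auto
    then have "{#entry x t, entry x (Suc t)#} = {#entry y t, entry y (Suc t)#}"
      by (simp add: read2_def)
    moreover have "entry x t \<noteq> entry y t" using mid t by auto
    ultimately show "entry x t = entry y (Suc t) \<and> entry x (Suc t) = entry y t"
      by (rule mset2_swap)
  qed
  have after: "\<And>k. entry x (w + k) = entry y (w + k)"
  proof -
    fix k show "entry x (w + k) = entry y (w + k)"
    proof (induction k)
      case 0 then show ?case using w by simp
    next
      case (Suc k)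
      show ?case
      proof (cases "Suc (w + k) \<le> Suc n")
        case True
        have "read2 x (Suc (w + k)) = read2 y (Suc (w + k))" using True w by (intro req) auto
        then show ?thesis using Suc by (simp add: read2_def)
      next
        case False
        then show ?thesis using x y entry_big[of x "Suc (w + k)"] entry_big[of y "Suc (w + k)"] by simp
      qed
    qed
  qed
  show ?thesis
  proof (intro exI conjI allI impI)
    show "1 \<le> u" by fact
    show "u \<le> w - 1" using w by simp
    show "w - 1 \<le> n" using wn by simp
  next
    fix t assume "t < u \<or> w - 1 < t"
    then show "entry x t = entry y t"
    proof
      assume "t < u" then show ?thesis by (rule bu)
    next
      assume "w - 1 < t"
      then have "t = w + (t - w)" by simp
      then show ?thesis using after by metis
    qed
  next
    fix t assume "u \<le> t" "t < w - 1"
    then show "entry x t = entry y (Suc t)" "entry x (Suc t) = entry y t" using sw by auto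
  next
    fix t assume "u \<le> t" "t \<le> w - 1"
    then show "entry x t \<noteq> entry y t" using mid w by auto
  qed
qed

definition altseg :: "nat list \<Rightarrow> nat \<Rightarrow> nat \<Rightarrow> bool" where
  "altseg x u L \<longleftrightarrow> (\<forall>t. u \<le> t \<and> Suc t < u + L \<longrightarrow>
      entry x t \<noteq> entry x (Suc t) \<and> (Suc (Suc t) < u + L \<longrightarrow> entry x t = entry x (Suc (Suc t))))"

definition good2 :: "nat \<Rightarrow> nat \<Rightarrow> nat list \<Rightarrow> bool" where
  "good2 K n x \<longleftrightarrow> (\<forall>u. 1 \<le> u \<and> u + K \<le> Suc n \<longrightarrow> \<not> altseg x u K)"

definition S1 :: "nat \<Rightarrow> nat list \<Rightarrow> int" where
  "S1 n x = (\<Sum>t = 1..n. int (entry x t))"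

definition S2 :: "nat \<Rightarrow> nat list \<Rightarrow> int" where
  "S2 n x = (\<Sum>t = 1..n. int t * int (entry x t))"

lemma alt_sum1: "(\<Sum>j = 0..k. (-1::int) ^ j) = (if even k then 1 else 0)"
  by (induction k) auto

lemma alt_sum2: "(\<Sum>j = 0..Suc (2 * m). (-1::int) ^ j * int (u + j)) = - int (Suc m)"
proof (induction m)
  case 0 then show ?case by simp
next
  case (Suc m)
  have e: "Suc (2 * Suc m) = Suc (Suc (Suc (2 * m)))" by simp
  show ?case unfolding e sum.atLeast0_atMost_Suc using Suc by simp
qed

lemma entry_lt: "x \<in> Sigma_n q n \<Longrightarrow> q \<ge> 1 \<Longrightarrow> entry x t < q"
proof -
  assume x: "x \<in> Sigma_n q n" and q: "q \<ge> 1"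
  show ?thesis
  proof (cases "1 \<le> t \<and> t \<le> length x")
    case True
    then have "x ! (t - 1) \<in> set x" by (intro nth_mem) auto
    then show ?thesis using x True by (auto simp: entry_def Sigma_n_def)
  next
    case False
    then show ?thesis using q by (auto simp: entry_def)
  qed
qed

lemma code_ok:
  assumes q2: "q \<ge> 2" and P1: "P \<ge> 1"
    and cop: "\<And>d. 1 \<le> d \<Longrightarrow> d < q \<Longrightarrow> coprime (int P) (int d)"
  shows "two_read_code q n 3 {x \<in> Sigma_n q n. good2 (2 * P) n x \<and> S1 n x mod int q = r1 \<and> S2 n x mod int P = r2}"
  unfolding two_read_code_def
proof (intro conjI ballI impI)
  show "{x \<in> Sigma_n q n. good2 (2 * P) n x \<and> S1 n x mod int q = r1 \<and> S2 n x mod int P = r2} \<subseteq> Sigma_n q n"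
    by auto
next
  fix x y
  assume xC: "x \<in> {x \<in> Sigma_n q n. good2 (2 * P) n x \<and> S1 n x mod int q = r1 \<and> S2 n x mod int P = r2}"
    and yC: "y \<in> {x \<in> Sigma_n q n. good2 (2 * P) n x \<and> S1 n x mod int q = r1 \<and> S2 n x mod int P = r2}"
    and ne: "x \<noteq> y"
  show "3 \<le> read_dist n x y"
  proof (rule ccontr)
    assume "\<not> 3 \<le> read_dist n x y"
    then have rd: "read_dist n x y \<le> 2" by simp
    have lx: "length x = n" and ly: "length y = n" using xC yC by (auto simp: Sigma_n_def)
    obtain u v where uv: "1 \<le> u" "u \<le> v" "v \<le> n"
      and out: "\<And>t. t < u \<or> v < t \<Longrightarrow> entry x t = entry y t"
      and sw: "\<And>t. u \<le> t \<Longrightarrow> t < v \<Longrightarrow> entry x t = entry y (Suc t) \<and> entry x (Suc t) = entry y t"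
      and mid: "\<And>t. u \<le> t \<Longrightarrow> t \<le> v \<Longrightarrow> entry x t \<noteq> entry y t"
      using struct[OF lx ly ne rd] by blast
    define h where "h t = int (entry x t) - int (entry y t)" for t
    define d where "d = h u"
    have hz: "\<And>t. t < u \<or> v < t \<Longrightarrow> h t = 0" using out by (simp add: h_def)
    have halt: "\<And>j. j \<le> v - u \<Longrightarrow> h (u + j) = (-1) ^ j * d"
    proof -
      fix j show "j \<le> v - u \<Longrightarrow> h (u + j) = (-1) ^ j * d"
      proof (induction j)
        case 0 then show ?case by (simp add: d_def)
      next
        case (Suc j)
        then have "u + j < v" by simp
        from sw[OF _ this] have "h (Suc (u + j)) = - h (u + j)" by (simp add: h_def)
        then show ?case using Suc by simp
      qed
    qed
    have d0: "d \<noteq> 0" using mid[of u] uv by (simp add: d_def h_def)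
    have dq: "\<bar>d\<bar> < int q"
      using entry_lt[of x q n u] entry_lt[of y q n u] xC yC q2 by (auto simp: d_def h_def)
    have sub: "{u..v} \<subseteq> {1..n}" using uv by auto
    have hz': "\<And>t. t \<notin> {u..v} \<Longrightarrow> h t = 0" using hz by auto
    have "S1 n x - S1 n y = (\<Sum>t = 1..n. h t)"
      by (simp add: S1_def h_def sum_subtractf)
    also have "\<dots> = (\<Sum>t = u..v. h t)"
      using sub hz' by (intro sum.mono_neutral_right) auto
    also have "\<dots> = (\<Sum>j = 0..v - u. h (u + j))"
      by (subst sum.atLeastAtMost_shift_0[OF uv(2)]) (simp add: comp_def)
    also have "\<dots> = (\<Sum>j = 0..v - u. (-1) ^ j * d)"
      using halt by (intro sum.cong) auto
    also have "\<dots> = d * (\<Sum>j = 0..v - u. (-1) ^ j)"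
      by (simp add: sum_distrib_left mult.commute)
    also have "\<dots> = d * (if even (v - u) then 1 else 0)"
      by (simp only: alt_sum1)
    finally have D1: "S1 n x - S1 n y = d * (if even (v - u) then 1 else 0)" .
    have "S2 n x - S2 n y = (\<Sum>t = 1..n. int t * h t)"
      by (simp add: S2_def h_def sum_subtractf right_diff_distrib)
    also have "\<dots> = (\<Sum>t = u..v. int t * h t)"
      using sub hz' by (intro sum.mono_neutral_right) auto
    also have "\<dots> = (\<Sum>j = 0..v - u. int (u + j) * h (u + j))"
      by (subst sum.atLeastAtMost_shift_0[OF uv(2)]) (simp add: comp_def)
    also have "\<dots> = (\<Sum>j = 0..v - u. ((-1) ^ j * int (u + j)) * d)"
      using halt by (intro sum.cong) auto
    also have "\<dots> = d * (\<Sum>j = 0..v - u. (-1) ^ j * int (u + j))"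
      by (simp add: sum_distrib_left mult.commute)
    finally have D2: "S2 n x - S2 n y = d * (\<Sum>j = 0..v - u. (-1) ^ j * int (u + j))" .
    have m1: "S1 n x mod int q = S1 n y mod int q" and m2: "S2 n x mod int P = S2 n y mod int P"
      using xC yC by auto
    show False
    proof (cases "even (v - u)")
      case True
      have "int q dvd S1 n x - S1 n y" using m1 by (simp only: mod_eq_dvd_iff)
      moreover have "S1 n x - S1 n y = d" using D1 True by simp
      ultimately have "int q dvd d" by simp
      then have "\<bar>int q\<bar> \<le> \<bar>d\<bar>" using d0 by (rule dvd_imp_le_int[rotated])
      then have "int q \<le> \<bar>d\<bar>" by simp
      then show False using dq by simp
    next
      case False
      then obtain m where m: "v - u = Suc (2 * m)" by (metis oddE add.commute plus_1_eq_Suc)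
      have "S2 n x - S2 n y = d * (- int (Suc m))" using D2 unfolding m alt_sum2 .
      moreover have "int P dvd S2 n x - S2 n y" using m2 by (simp only: mod_eq_dvd_iff)
      ultimately have "int P dvd d * (- int (Suc m))" by simp
      then have "int P dvd d * int (Suc m)" by (metis dvd_minus_iff mult_minus_right)
      moreover have "coprime (int P) d"
      proof -
        have "coprime (int P) (int (nat \<bar>d\<bar>))" using cop[of "nat \<bar>d\<bar>"] d0 dq by simp
        then show ?thesis by simp
      qed
      ultimately have "int P dvd int (Suc m)" by (simp add: coprime_dvd_mult_right_iff)
      then have "P dvd Suc m" by (simp only: of_nat_dvd_iff)
      then have Pm: "P \<le> Suc m" by (rule dvd_imp_le) simp
      have "altseg x u (2 * P)"
        unfolding altseg_def
      proof (intro allI impI conjI)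
        fix t assume t: "u \<le> t \<and> Suc t < u + 2 * P"
        then have tv: "t < v" using Pm m by linarith
        from sw[OF _ tv] mid[of t] t tv show "entry x t \<noteq> entry x (Suc t)" by auto
        assume t2: "Suc (Suc t) < u + 2 * P"
        then have "Suc t < v" using Pm m by linarith
        from sw[OF _ this] sw[OF _ tv] t show "entry x t = entry x (Suc (Suc t))" by auto
      qed
      moreover have "u + 2 * P \<le> Suc n" using Pm m uv by linarith
      ultimately show False using xC uv by (auto simp: good2_def)
    qed
  qed
qed

lemma altseg_inj:
  assumes x: "x \<in> Sigma_n q n" and x': "x' \<in> Sigma_n q n"
    and a: "altseg x u K" and a': "altseg x' u K" and K2: "2 \<le> K" and uK: "u + K \<le> Suc n"
    and e: "take (Suc u) x @ drop (u + K - 1) x = take (Suc u) x' @ drop (u + K - 1) x'"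
  shows "x = x'"
proof -
  have lx: "length x = n" and lx': "length x' = n" using x x' by (auto simp: Sigma_n_def)
  have tk: "take (Suc u) x = take (Suc u) x'" and dr: "drop (u + K - 1) x = drop (u + K - 1) x'"
    using e lx lx' uK K2 by (auto simp: append_eq_append_conv)
  have "entry x t = entry x' t" for t
  proof (induction t rule: less_induct)
    case (less t)
    show ?case
    proof (cases "t \<le> Suc u")
      case True
      show ?thesis
      proof (cases "t = 0")
        case False
        then have "x ! (t - 1) = take (Suc u) x ! (t - 1)" "x' ! (t - 1) = take (Suc u) x' ! (t - 1)"
          using True by auto
        then show ?thesis using tk lx lx' by (simp add: entry_def)
      qed simp
    next
      case nle: False
      show ?thesis
      proof (cases "u + K \<le> t")
        case True
        show ?thesis
        proof (cases "t \<le> n")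
          case True
          have "x ! (t - 1) = drop (u + K - 1) x ! (t - 1 - (u + K - 1))"
               "x' ! (t - 1) = drop (u + K - 1) x' ! (t - 1 - (u + K - 1))"
            using True \<open>u + K \<le> t\<close> lx lx' uK K2 by (auto simp: nth_drop)
          then show ?thesis using dr lx lx' True nle by (simp add: entry_def)
        next
          case False
          then show ?thesis using lx lx' by (simp add: entry_def)
        qed
      next
        case False
        then have t2: "u \<le> t - 2" "Suc (t - 2) < u + K" "Suc (Suc (t - 2)) < u + K" "Suc (Suc (t - 2)) = t" using nle by auto
        have "entry x (t - 2) = entry x (Suc (Suc (t - 2)))" using a t2(1-3) unfolding altseg_def by blast
        then have "entry x (t - 2) = entry x t" using t2(4) by simp
        moreover have "entry x' (t - 2) = entry x' (Suc (Suc (t - 2)))" using a' t2(1-3) unfolding altseg_def by blast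
        then have "entry x' (t - 2) = entry x' t" using t2(4) by simp
        moreover have "entry x (t - 2) = entry x' (t - 2)" using less nle by simp
        ultimately show ?thesis by simp
      qed
    qed
  qed
  then show ?thesis using lx lx' by (intro entry_eqI) auto
qed

lemma card_altseg:
  assumes K2: "2 \<le> K" and uK: "u + K \<le> Suc n"
  shows "card {x \<in> Sigma_n q n. altseg x u K} \<le> q ^ (n + 2 - K)"
proof -
  let ?A = "{x \<in> Sigma_n q n. altseg x u K}"
  let ?f = "\<lambda>x. take (Suc u) x @ drop (u + K - 1) x"
  have "inj_on ?f ?A"
    by (rule inj_onI) (use altseg_inj K2 uK in blast)
  moreover have "?f ` ?A \<subseteq> Sigma_n q (n + 2 - K)"
  proof (rule image_subsetI)
    fix x assume "x \<in> ?A"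
    then have x: "set x \<subseteq> {..<q}" "length x = n" by (auto simp: Sigma_n_def)
    have "set (take (Suc u) x) \<subseteq> set x" "set (drop (u + K - 1) x) \<subseteq> set x"
      by (rule set_take_subset, rule set_drop_subset)
    then show "?f x \<in> Sigma_n q (n + 2 - K)"
      using x K2 uK by (auto simp: Sigma_n_def)
  qed
  ultimately have "card ?A \<le> card (Sigma_n q (n + 2 - K))"
    by (intro card_inj_on_le finite_Sigma_n)
  then show ?thesis by (simp add: card_Sigma_n)
qed

lemma bad_count:
  assumes K2: "2 \<le> K"
  shows "card {x \<in> Sigma_n q n. \<not> good2 K n x} \<le> n * q ^ (n + 2 - K)"
proof -
  have "{x \<in> Sigma_n q n. \<not> good2 K n x} \<subseteq>
        (\<Union>u\<in>{u \<in> {1..n}. u + K \<le> Suc n}. {x \<in> Sigma_n q n. altseg x u K})"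
    using K2 by (auto simp: good2_def)
  then have "card {x \<in> Sigma_n q n. \<not> good2 K n x} \<le>
        card (\<Union>u\<in>{u \<in> {1..n}. u + K \<le> Suc n}. {x \<in> Sigma_n q n. altseg x u K})"
    by (intro card_mono) (auto simp: finite_Sigma_n)
  also have "\<dots> \<le> (\<Sum>u\<in>{u \<in> {1..n}. u + K \<le> Suc n}. card {x \<in> Sigma_n q n. altseg x u K})"
    by (rule card_UN_le) simp
  also have "\<dots> \<le> (\<Sum>u\<in>{u \<in> {1..n}. u + K \<le> Suc n}. q ^ (n + 2 - K))"
    using K2 by (intro sum_mono card_altseg) auto
  also have "\<dots> \<le> n * q ^ (n + 2 - K)"
  proof -
    have "card {u \<in> {1..n}. u + K \<le> Suc n} \<le> card {1..n}" by (intro card_mono) auto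
    then show ?thesis by simp
  qed
  finally show ?thesis .
qed

lemma pigeon:
  assumes "finite S" "finite R" "R \<noteq> {}" "f ` S \<subseteq> R"
  shows "\<exists>r\<in>R. card S \<le> card R * card {x \<in> S. f x = r}"
proof -
  define g where "g r = card {x \<in> S. f x = r}" for r
  have "Max (g ` R) \<in> g ` R" using assms(2,3) by (intro Max_in) auto
  then obtain r where r0: "r \<in> R" "g r = Max (g ` R)" by auto
  have r1: "\<And>r'. r' \<in> R \<Longrightarrow> g r' \<le> g r" unfolding r0(2) using assms(2) by (intro Max_ge) auto
  note r = r0(1) r1
  have "card S = (\<Sum>r\<in>R. g r)"
    unfolding g_def using sum.group[OF assms(1,2,4), of "\<lambda>_. 1::nat"] by simp
  also have "\<dots> \<le> card R * g r"
    using sum_bounded_above[of R g "g r"] r by simp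
  finally show ?thesis using r unfolding g_def by blast
qed

lemma upper_main:
  assumes q2: "q \<ge> 2" and P1: "P \<ge> 1"
    and cop: "\<And>d. 1 \<le> d \<Longrightarrow> d < q \<Longrightarrow> coprime (int P) (int d)"
    and pos: "real n * real q ^ (n + 2 - 2 * P) < real q ^ n"
  shows "\<exists>C. two_read_code q n 3 C \<and> C \<noteq> {} \<and>
           real q ^ n - real n * real q ^ (n + 2 - 2 * P) \<le> real q * real P * real (card C)"
proof -
  define S where "S = {x \<in> Sigma_n q n. good2 (2 * P) n x}"
  define B where "B = {x \<in> Sigma_n q n. \<not> good2 (2 * P) n x}"
  have SB: "Sigma_n q n = S \<union> B" "S \<inter> B = {}" unfolding S_def B_def by auto
  have fS: "finite S" "finite B" unfolding S_def B_def by (auto simp: finite_Sigma_n)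
  have "card S + card B = q ^ n" by (metis card_Un_disjoint[OF fS SB(2)] SB(1) card_Sigma_n)
  then have e1: "real (card S) + real (card B) = real q ^ n" by (metis of_nat_add of_nat_power)
  have "card B \<le> n * q ^ (n + 2 - 2 * P)" unfolding B_def using P1 by (intro bad_count) auto
  then have e2: "real (card B) \<le> real n * real q ^ (n + 2 - 2 * P)" by (metis of_nat_le_iff of_nat_mult of_nat_power)
  have cS: "real q ^ n - real n * real q ^ (n + 2 - 2 * P) \<le> real (card S)" using e1 e2 by linarith
  define R where "R = {0..<int q} \<times> {0..<int P}"
  define f where "f x = (S1 n x mod int q, S2 n x mod int P)" for x
  have fR: "f ` S \<subseteq> R" using q2 P1 by (auto simp: f_def R_def)
  have cR: "card R = q * P" by (simp add: R_def card_cartesian_product)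
  have "finite R" "R \<noteq> {}" using q2 P1 by (auto simp: R_def)
  from pigeon[OF fS(1) this fR] obtain r where r: "r \<in> R" "card S \<le> card R * card {x \<in> S. f x = r}"
    by blast
  obtain r1 r2 where rr: "r = (r1, r2)" by (cases r)
  define C where "C = {x \<in> Sigma_n q n. good2 (2 * P) n x \<and> S1 n x mod int q = r1 \<and> S2 n x mod int P = r2}"
  have CS: "{x \<in> S. f x = r} = C" unfolding C_def S_def f_def rr by auto
  have code: "two_read_code q n 3 C" unfolding C_def by (rule code_ok[OF q2 P1 cop])
  have "real (card S) \<le> real q * real P * real (card C)"
    using r(2) unfolding CS cR by (metis of_nat_le_iff of_nat_mult)
  with cS have main: "real q ^ n - real n * real q ^ (n + 2 - 2 * P) \<le> real q * real P * real (card C)"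
    by linarith
  have "C \<noteq> {}"
  proof
    assume "C = {}"
    then show False using main pos by simp
  qed
  with code main show ?thesis by blast
qed

lemma log_as_ln: "log q x = ln x / ln q" by (simp add: log_def)

lemma low_asym:
  fixes q :: real
  assumes q2: "q \<ge> 2"
  fixes L :: "nat \<Rightarrow> real" and lf :: "nat \<Rightarrow> nat" and \<beta> :: "nat \<Rightarrow> real"
  assumes L_def: "\<And>n. L n = log q (real n)"
  assumes lf_def: "\<And>n. lf n = nat \<lfloor>L n - 2 * log q (L n)\<rfloor>"
  assumes \<beta>_def: "\<And>n. \<beta> n = 1 / (real (lf n) + 1) + exp (- ((real (lf n) + 1) * real (n div lf n) / q ^ lf n))"
  shows "((\<lambda>n. L n * \<beta> n) \<longlongrightarrow> 1) sequentially"
    and "\<forall>\<^sub>F n in sequentially. lf n \<ge> 1 \<and> L n > 0"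
proof -
  define c where "c = ln q"
  have c: "c > 0" using q2 by (simp add: c_def)
  have Lc: "L n = ln (real n) / c" for n by (simp add: L_def c_def log_def)
  have lq: "log q x = ln x / c" for x by (simp add: c_def log_def)
  define y where "y n = L n - 2 * log q (L n)" for n
  have yc: "y n = ln (real n) / c - 2 * ln (ln (real n) / c) / c" for n
    by (simp add: y_def Lc lq)
  have ev1: "\<forall>\<^sub>F n in sequentially. 1 \<le> y n" unfolding yc using c by real_asymp
  have ev2: "\<forall>\<^sub>F n in sequentially. 1 \<le> L n" unfolding Lc using c by real_asymp
  have ev3: "\<forall>\<^sub>F n in sequentially. L n \<le> real n / 2" unfolding Lc using c by real_asymp
  have ev4: "\<forall>\<^sub>F n in sequentially. n \<ge> 1" by (rule eventually_ge_at_top)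
  show "\<forall>\<^sub>F n in sequentially. lf n \<ge> 1 \<and> L n > 0"
    using ev1 ev2
  proof eventually_elim
    case (elim n)
    then show ?case unfolding lf_def y_def[symmetric] by linarith
  qed
  define a where "a n = L n / (L n + 1)" for n
  define b where "b n = L n / y n + L n * exp (- (L n ^ 2 / 2))" for n
  have a_lim: "(a \<longlongrightarrow> 1) sequentially" unfolding a_def Lc using c by real_asymp
  have b_lim: "(b \<longlongrightarrow> 1) sequentially" unfolding b_def yc Lc using c by real_asymp
  have bounds: "\<forall>\<^sub>F n in sequentially. a n \<le> L n * \<beta> n \<and> L n * \<beta> n \<le> b n"
    using ev1 ev2 ev3 ev4
  proof eventually_elim
    case (elim n)
    define l where "l = lf n"
    have ly: "real l \<le> y n" "y n < real l + 1" unfolding l_def lf_def y_def[symmetric]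
      using elim by linarith+
    have l1: "l \<ge> 1" using ly elim by linarith
    have yL: "y n \<le> L n"
    proof -
      have "0 \<le> log q (L n)" using elim q2 by simp
      then show ?thesis unfolding y_def by simp
    qed
    have Lpos: "L n > 0" using elim by simp
    have npos: "real n > 0" using elim by simp
    define E where "E = exp (- ((real l + 1) * real (n div l) / q ^ l))"
    have bl: "\<beta> n = 1 / (real l + 1) + E" unfolding \<beta>_def E_def l_def by simp
    have E0: "E \<ge> 0" unfolding E_def by simp
    have lo: "a n \<le> L n * \<beta> n"
    proof -
      have "L n / (L n + 1) \<le> L n / (real l + 1)"
        using Lpos ly yL by (intro divide_left_mono) auto
      also have "\<dots> \<le> L n * \<beta> n" unfolding bl using Lpos E0 by (simp add: algebra_simps)
      finally show ?thesis unfolding a_def .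
    qed
    have qly: "q ^ l \<le> real n / L n ^ 2"
    proof -
      have "q ^ l = q powr real l" using q2 by (simp add: powr_realpow)
      also have "\<dots> \<le> q powr y n" using q2 ly by (intro powr_mono) auto
      also have "q powr y n = real n / L n ^ 2"
      proof -
        have "q powr y n = exp (c * y n)" unfolding powr_def c_def using q2 by simp
        also have "c * y n = ln (real n) - 2 * ln (L n)"
        proof -
          have cL: "c * L n = ln (real n)" using c by (simp add: Lc)
          show ?thesis unfolding y_def lq using c cL by (simp add: right_diff_distrib)
        qed
        also have "exp (ln (real n) - 2 * ln (L n)) = real n / L n ^ 2"
        proof -
          have "exp (2 * ln (L n)) = L n ^ 2" using Lpos
            by (metis exp_ln exp_of_nat_mult of_nat_numeral)
          then show ?thesis using npos by (simp add: exp_diff)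
        qed
        finally show ?thesis .
      qed
      finally show ?thesis .
    qed
    have ndl: "real n / 2 \<le> (real l + 1) * real (n div l)"
    proof -
      have "n = n div l * l + n mod l" by simp
      moreover have "n mod l < l" using l1 by simp
      ultimately have "n \<le> n div l * l + l" by linarith
      then have "real n \<le> real (n div l * l + l)" by (simp only: of_nat_le_iff)
      then have "real n \<le> real (n div l) * real l + real l" by simp
      moreover have "real l \<le> real n / 2" using ly yL elim by linarith
      ultimately show ?thesis by (simp add: algebra_simps)
    qed
    have ratio: "L n ^ 2 / 2 \<le> (real l + 1) * real (n div l) / q ^ l"
    proof -
      have qpos: "q ^ l > 0" using q2 by simp
      have "L n ^ 2 / 2 = (real n / 2) / (real n / L n ^ 2)" using npos Lpos by (simp add: field_simps)
      also have "\<dots> \<le> ((real l + 1) * real (n div l)) / (real n / L n ^ 2)"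
        using ndl npos Lpos by (intro divide_right_mono) auto
      also have "\<dots> \<le> ((real l + 1) * real (n div l)) / q ^ l"
      proof (rule divide_left_mono[OF qly])
        show "0 \<le> (real l + 1) * real (n div l)" by simp
        have "0 < real n / L n ^ 2" using npos Lpos by simp
        then show "0 < real n / L n ^ 2 * q ^ l" using qpos by (rule mult_pos_pos)
      qed
      finally show ?thesis .
    qed
    have EE: "E \<le> exp (- (L n ^ 2 / 2))" unfolding E_def using ratio by simp
    have up: "L n * \<beta> n \<le> b n"
    proof -
      have "L n * \<beta> n = L n / (real l + 1) + L n * E" unfolding bl by (simp add: algebra_simps)
      also have "\<dots> \<le> L n / y n + L n * exp (- (L n ^ 2 / 2))"
        using Lpos ly elim EE by (intro add_mono divide_left_mono mult_left_mono) auto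
      finally show ?thesis unfolding b_def .
    qed
    show ?case using lo up by simp
  qed
  show "((\<lambda>n. L n * \<beta> n) \<longlongrightarrow> 1) sequentially"
    by (rule tendsto_sandwich[OF _ _ a_lim b_lim]) (use bounds in \<open>auto elim: eventually_mono\<close>)
qed

lemma up_asym:
  fixes q :: real and Qf :: nat
  assumes q2: "q \<ge> 2" and Q1: "Qf \<ge> 1"
  fixes L :: "nat \<Rightarrow> real" and M P :: "nat \<Rightarrow> nat" and \<epsilon> :: "nat \<Rightarrow> real"
  assumes L_def: "\<And>n. L n = log q (real n)"
  assumes M_def: "\<And>n. M n = nat \<lceil>L n / 2 + log q (L n)\<rceil>"
  assumes P_def: "\<And>n. P n = (M n div Qf + 1) * Qf + 1"
  assumes \<epsilon>_def: "\<And>n. \<epsilon> n = real n * q ^ 2 / q ^ (2 * P n)"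
  shows "((\<lambda>n. 2 * real (P n) / L n) \<longlongrightarrow> 1) sequentially"
    and "(\<epsilon> \<longlongrightarrow> 0) sequentially"
    and "\<forall>\<^sub>F n in sequentially. 2 * P n \<le> n + 2 \<and> \<epsilon> n < 1 \<and> L n > 0"
proof -
  define c where "c = ln q"
  have c: "c > 0" using q2 by (simp add: c_def)
  have Lc: "L n = ln (real n) / c" for n by (simp add: L_def c_def log_def)
  have lq: "log q x = ln x / c" for x by (simp add: c_def log_def)
  define K where "K = 2 * real Qf + 4"
  have K: "K > 0" by (simp add: K_def)
  have Pb: "M n + 2 \<le> P n \<and> P n \<le> M n + Qf + 1" for n
  proof -
    have "M n div Qf * Qf \<le> M n" by simp
    moreover have "M n < (M n div Qf + 1) * Qf"
    proof -
      have "M n div Qf * Qf + M n mod Qf = M n" by (rule div_mult_mod_eq)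
      moreover have "M n mod Qf < Qf" using Q1 by simp
      ultimately show ?thesis by (metis add_less_cancel_left add_mult_distrib mult_1 )
    qed
    ultimately show ?thesis unfolding P_def by (simp add: algebra_simps)
  qed
  have ev2: "\<forall>\<^sub>F n in sequentially. 1 \<le> L n" unfolding Lc using c by real_asymp
  have ev4: "\<forall>\<^sub>F n in sequentially. n \<ge> 1" by (rule eventually_ge_at_top)
  have Pr: "\<forall>\<^sub>F n in sequentially. L n + 2 * log q (L n) \<le> 2 * real (P n) \<and>
                  2 * real (P n) \<le> L n + 2 * log q (L n) + K"
    using ev2
  proof eventually_elim
    case (elim n)
    have z0: "0 \<le> L n / 2 + log q (L n)" using elim q2 by simp
    have "real (M n) = real_of_int \<lceil>L n / 2 + log q (L n)\<rceil>" unfolding M_def using z0 by simp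
    then have Mb: "L n / 2 + log q (L n) \<le> real (M n)" "real (M n) < L n / 2 + log q (L n) + 1"
      by linarith+
    have "real (M n) + 2 \<le> real (P n)" "real (P n) \<le> real (M n) + real Qf + 1" using Pb[of n]
      by (metis of_nat_add of_nat_le_iff of_nat_numeral, metis of_nat_1 of_nat_add of_nat_le_iff)
    then show ?case using Mb unfolding K_def by linarith
  qed
  have up_lim: "((\<lambda>n. (L n + 2 * log q (L n) + K) / L n) \<longlongrightarrow> 1) sequentially"
    unfolding Lc lq using c K by real_asymp
  show "((\<lambda>n. 2 * real (P n) / L n) \<longlongrightarrow> 1) sequentially"
  proof (rule tendsto_sandwich[OF _ _ tendsto_const up_lim])
    show "\<forall>\<^sub>F n in sequentially. 1 \<le> 2 * real (P n) / L n"
      using Pr ev2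
    proof eventually_elim
      case (elim n)
      then have "0 \<le> log q (L n)" using q2 by simp
      then show ?case using elim by (simp add: field_simps)
    qed
    show "\<forall>\<^sub>F n in sequentially. 2 * real (P n) / L n \<le> (L n + 2 * log q (L n) + K) / L n"
      using Pr ev2
    proof eventually_elim
      case (elim n)
      then show ?case by (intro divide_right_mono) auto
    qed
  qed
  have epsb: "\<forall>\<^sub>F n in sequentially. 0 \<le> \<epsilon> n \<and> \<epsilon> n \<le> q ^ 2 / L n ^ 2"
    using Pr ev2 ev4
  proof eventually_elim
    case (elim n)
    have npos: "real n > 0" "L n > 0" using elim by auto
    have "q powr (L n + 2 * log q (L n)) = real n * L n ^ 2"
    proof -
      have "L n + 2 * log q (L n) = L n + (log q (L n) + log q (L n))" by simp
      then have "q powr (L n + 2 * log q (L n)) = q powr (L n) * (q powr (log q (L n)) * q powr (log q (L n)))"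
        by (simp only: powr_add)
      then have "q powr (L n + 2 * log q (L n)) = q powr (L n) * (q powr (log q (L n))) ^ 2"
        by (simp add: power2_eq_square)
      also have "\<dots> = real n * L n ^ 2" using q2 npos unfolding L_def by simp
      finally show ?thesis .
    qed
    moreover have "q powr (L n + 2 * log q (L n)) \<le> q ^ (2 * P n)"
    proof -
      have "q powr (L n + 2 * log q (L n)) \<le> q powr (real (2 * P n))"
        using elim q2 by (intro powr_mono) auto
      also have "\<dots> = q ^ (2 * P n)" using q2 by (subst powr_realpow) auto
      finally show ?thesis .
    qed
    ultimately have "real n * L n ^ 2 \<le> q ^ (2 * P n)" by simp
    then have "\<epsilon> n \<le> real n * q ^ 2 / (real n * L n ^ 2)"
      unfolding \<epsilon>_def using npos q2 by (intro divide_left_mono) auto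
    also have "\<dots> = q ^ 2 / L n ^ 2" using npos by simp
    finally show ?case unfolding \<epsilon>_def using q2 by simp
  qed
  have lim0: "((\<lambda>n. q ^ 2 / L n ^ 2) \<longlongrightarrow> 0) sequentially" unfolding Lc using c by real_asymp
  show "(\<epsilon> \<longlongrightarrow> 0) sequentially"
    by (rule tendsto_sandwich[OF _ _ tendsto_const lim0]) (use epsb in \<open>auto elim: eventually_mono\<close>)
  have ev5: "\<forall>\<^sub>F n in sequentially. q ^ 2 / L n ^ 2 < 1" unfolding Lc using c by real_asymp
  have ev6: "\<forall>\<^sub>F n in sequentially. L n + 2 * log q (L n) + K \<le> real n"
    unfolding Lc lq using c K by real_asymp
  show "\<forall>\<^sub>F n in sequentially. 2 * P n \<le> n + 2 \<and> \<epsilon> n < 1 \<and> L n > 0"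
    using Pr ev2 epsb ev5 ev6
  proof eventually_elim
    case (elim n)
    then have "real (2 * P n) \<le> real (n + 2)" by simp
    then have "2 * P n \<le> n + 2" by (simp only: of_nat_le_iff)
    moreover have "\<epsilon> n < 1" using elim by linarith
    moreover have "L n > 0" using elim by linarith
    ultimately show ?case by blast
  qed
qed

lemma cop_fact:
  assumes "1 \<le> d" "d < q"
  shows "coprime (int ((k + 1) * fact (q - 1) + 1)) (int d)"
proof -
  have dv: "d dvd fact (q - 1)" using assms by (intro dvd_fact) auto
  have "coprime ((k + 1) * fact (q - 1) + 1) d"
  proof (rule coprimeI)
    fix c :: nat assume c1: "c dvd (k + 1) * fact (q - 1) + 1" and c2: "c dvd d"
    have "c dvd (k + 1) * fact (q - 1)" using c2 dv by (meson dvd_trans dvd_mult)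
    then have "c dvd 1" using c1 by (simp only: dvd_add_right_iff)
    then show "is_unit c" by simp
  qed
  then show ?thesis by (simp only: coprime_int_iff)
qed

theorem corollary3:
  fixes q :: nat
  assumes "q \<ge> 2"
  shows "\<exists>f g :: nat \<Rightarrow> real. f \<longlonglongrightarrow> 0 \<and> g \<longlonglongrightarrow> 0 \<and>
    (\<forall>\<^sub>F n in sequentially.
       log q (log q n) - f n \<le> r_star q n \<and>
       r_star q n \<le> log q (log q n) + 1 - log q 2 + g n)"
proof -
  have q2r: "real q \<ge> 2" using assms by simp
  have q1: "q \<ge> 1" using assms by simp
  define L where "L n = log (real q) (real n)" for n :: nat
  define lf where "lf n = nat \<lfloor>L n - 2 * log (real q) (L n)\<rfloor>" for n
  define \<beta> where "\<beta> n = 1 / (real (lf n) + 1) + exp (- ((real (lf n) + 1) * real (n div lf n) / real q ^ lf n))" for n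
  note LA = low_asym[of "real q" L lf \<beta>, OF q2r L_def lf_def \<beta>_def]
  define f where "f n = log (real q) (L n * \<beta> n)" for n
  have f_lim: "f \<longlonglongrightarrow> 0"
  proof -
    have "f \<longlonglongrightarrow> log (real q) 1" unfolding f_def
      by (rule tendsto_log[OF tendsto_const LA(1)]) (use q2r in auto)
    then show ?thesis by simp
  qed
  have lowev: "\<forall>\<^sub>F n in sequentially. log q (log q n) - f n \<le> r_star q n"
    using LA(2)
  proof eventually_elim
    case (elim n)
    have Lp: "L n > 0" and l1: "lf n \<ge> 1" using elim by auto
    have bp: "\<beta> n > 0" unfolding \<beta>_def by (intro add_pos_nonneg) auto
    show ?case
    proof (rule r_star_ge[OF q1])
      fix C assume code: "two_read_code q n 3 C" and ne: "C \<noteq> {}"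
      have fC: "finite C" using code finite_Sigma_n finite_subset
        unfolding two_read_code_def by blast
      have cpos: "real (card C) > 0" using fC ne by (simp add: card_gt_0_iff)
      have cb: "real (card C) \<le> real q ^ n * \<beta> n"
        using lower_main[OF assms code l1] unfolding \<beta>_def by (simp add: algebra_simps)
      have "log (real q) (real (card C)) \<le> log (real q) (real q ^ n * \<beta> n)"
        using cb cpos q2r by (subst log_le_cancel_iff) auto
      also have "\<dots> = real n + log (real q) (\<beta> n)"
        using q2r bp by (simp add: log_mult log_nat_power)
      finally have "log (real q) (real (card C)) \<le> real n + log (real q) (\<beta> n)" .
      moreover have "f n = log (real q) (L n) + log (real q) (\<beta> n)"
        unfolding f_def using Lp bp q2r by (simp add: log_mult)
      moreover have "log q (log q n) = log (real q) (L n)" by (simp add: L_def)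
      ultimately show "log q (log q n) - f n \<le> redundancy q n C"
        unfolding redundancy_def by linarith
    qed
  qed
  define Qf where "Qf = (fact (q - 1) :: nat)"
  have Q1: "Qf \<ge> 1" unfolding Qf_def by (simp add: Suc_le_eq)
  define M where "M n = nat \<lceil>L n / 2 + log (real q) (L n)\<rceil>" for n
  define P where "P n = (M n div Qf + 1) * Qf + 1" for n
  define \<epsilon> where "\<epsilon> n = real n * real q ^ 2 / real q ^ (2 * P n)" for n
  note UA = up_asym[of "real q" Qf L M P \<epsilon>, OF q2r Q1 L_def M_def P_def \<epsilon>_def]
  define g where "g n = log (real q) (2 * real (P n) / L n) - log (real q) (1 - \<epsilon> n)" for n
  have g_lim: "g \<longlonglongrightarrow> 0"
  proof -
    have "(\<lambda>n. 1 - \<epsilon> n) \<longlonglongrightarrow> 1 - 0" by (intro tendsto_diff tendsto_const UA(2))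
    then have a: "(\<lambda>n. log (real q) (1 - \<epsilon> n)) \<longlonglongrightarrow> log (real q) 1"
      by (intro tendsto_log[OF tendsto_const]) (use q2r in auto)
    have b: "(\<lambda>n. log (real q) (2 * real (P n) / L n)) \<longlonglongrightarrow> log (real q) 1"
      by (intro tendsto_log[OF tendsto_const UA(1)]) (use q2r in auto)
    have "g \<longlonglongrightarrow> log (real q) 1 - log (real q) 1" unfolding g_def by (intro tendsto_diff a b)
    then show ?thesis by simp
  qed
  have upev: "\<forall>\<^sub>F n in sequentially. r_star q n \<le> log q (log q n) + 1 - log q 2 + g n"
    using UA(3)
  proof eventually_elim
    case (elim n)
    have P1: "P n \<ge> 1" unfolding P_def by simp
    have cop: "\<And>d. 1 \<le> d \<Longrightarrow> d < q \<Longrightarrow> coprime (int (P n)) (int d)"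
      unfolding P_def Qf_def by (rule cop_fact)
    have qp: "real q ^ (2 * P n) > 0" using q2r by simp
    have pw: "real q ^ (n + 2 - 2 * P n) * real q ^ (2 * P n) = real q ^ n * real q ^ 2"
      using elim by (simp add: power_add[symmetric])
    have eq: "real n * real q ^ (n + 2 - 2 * P n) = real q ^ n * \<epsilon> n"
    proof -
      have "real q ^ (n + 2 - 2 * P n) = real q ^ n * real q ^ 2 / real q ^ (2 * P n)"
        using pw qp by (simp add: field_simps)
      then show ?thesis unfolding \<epsilon>_def by (simp add: field_simps)
    qed
    have pos: "real n * real q ^ (n + 2 - 2 * P n) < real q ^ n"
      unfolding eq using elim q2r by simp
    obtain C where code: "two_read_code q n 3 C" and ne: "C \<noteq> {}"
      and cb: "real q ^ n - real n * real q ^ (n + 2 - 2 * P n) \<le> real q * real (P n) * real (card C)"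
      using upper_main[OF assms P1 cop pos] by blast
    have ep: "1 - \<epsilon> n > 0" using elim by simp
    have Lp: "L n > 0" using elim by simp
    have Pp: "real (P n) > 0" using P1 by simp
    have qpos: "real q > 0" using q2r by simp
    have cb2: "real q ^ n * (1 - \<epsilon> n) / (real q * real (P n)) \<le> real (card C)"
      using cb eq qpos Pp by (simp add: field_simps)
    have lpos: "real q ^ n * (1 - \<epsilon> n) / (real q * real (P n)) > 0"
      using ep qpos Pp by simp
    have "log (real q) (real q ^ n * (1 - \<epsilon> n) / (real q * real (P n))) \<le> log (real q) (real (card C))"
      using cb2 lpos q2r by (subst log_le_cancel_iff) auto
    moreover have "log (real q) (real q ^ n * (1 - \<epsilon> n) / (real q * real (P n))) =
        real n + log (real q) (1 - \<epsilon> n) - 1 - log (real q) (real (P n))"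
      using ep qpos Pp q2r by (simp add: log_mult log_divide log_nat_power)
    moreover have "log (real q) (real (P n)) = log (real q) (2 * real (P n) / L n) + log (real q) (L n) - log (real q) 2"
      using Lp Pp q2r by (simp add: log_mult log_divide)
    ultimately have "redundancy q n C \<le> log (real q) (L n) + 1 - log (real q) 2 + g n"
      unfolding redundancy_def g_def by linarith
    moreover have "r_star q n \<le> redundancy q n C" by (rule r_star_le[OF code ne])
    ultimately show ?case unfolding L_def by simp
  qed
  show ?thesis
    by (intro exI[of _ f] exI[of _ g] conjI f_lim g_lim) (use lowev upev in \<open>auto elim: eventually_mono intro: eventually_conj\<close>)
qed

end
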